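(* Let $P$ be a poset, equipped with its order topology, such that (i) every element of $P$ has finite height, and (ii) every down-equivalence class of $P$ is countable. Then any two elements of $\mathrm{Homeo}(P)$ are isotopic if and only if they are equal.
   Context: The order topology on a poset $P$ declares the lower sets open, where $S\subseteq P$ is a lower set if $a\le b$ and $b\in S$ imply $a\in S$; continuous maps are exactly order-preserving maps. A chain of length $n$ is a sequence of distinct points $a_0<a_1<\cdots<a_n$ in $P$. The height of $a\in P$ is $\mathrm{Ht}(a)=\sup\{n\in\mathbb{N}\cup\{\infty\}:\exists\, a_0<\cdots<a_n=a\}$. Two elements $a,a'\in P$ are down-equivalent if for all $b\in P$, $b<a$ iff $b<a'$; this is an equivalence relation. $\mathrm{Homeo}(P)$ is the group of homeomorphisms of $P$; two homeomorphisms $f,g$ are isotopic if there is a continuous $H:P\times[0,1]\to P$ with each $H_t=H(\cdot,t)$ a homeomorphism, $H_0=f$, $H_1=g$. *)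

theory Defs
  imports "HOL-Analysis.Analysis" "HOL-Library.Extended_Nat" "HOL-Library.Countable_Set"
begin

definition lower_set :: "'a::order set \<Rightarrow> bool" where
  "lower_set S \<longleftrightarrow> (\<forall>a b. a \<le> b \<longrightarrow> b \<in> S \<longrightarrow> a \<in> S)"

lemma istopology_lower_set: "istopology lower_set"
  unfolding istopology_def lower_set_def by blast

definition poset_topology :: "'a::order topology" where
  "poset_topology = topology lower_set"

lemma openin_poset_topology: "openin poset_topology S \<longleftrightarrow> lower_set S"
  unfolding poset_topology_def using istopology_lower_set by (metis topology_inverse')

definition chain_ending_at :: "'a::order \<Rightarrow> nat \<Rightarrow> bool" where
  "chain_ending_at a n \<longleftrightarrow> (\<exists>c :: nat \<Rightarrow> 'a. (\<forall>i<n. c i < c (Suc i)) \<and> c n = a)"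

definition Ht :: "'a::order \<Rightarrow> enat" where
  "Ht a = Sup {enat n | n. chain_ending_at a n}"

definition down_equiv :: "'a::order \<Rightarrow> 'a \<Rightarrow> bool" where
  "down_equiv a a' \<longleftrightarrow> (\<forall>b. b < a \<longleftrightarrow> b < a')"

definition isotopic :: "('a::order \<Rightarrow> 'a) \<Rightarrow> ('a \<Rightarrow> 'a) \<Rightarrow> bool" where
  "isotopic f g \<longleftrightarrow> (\<exists>H :: 'a \<times> real \<Rightarrow> 'a.
      continuous_map (prod_topology poset_topology (top_of_set {0..1})) poset_topology H
    \<and> (\<forall>t\<in>{0..1}. homeomorphic_map poset_topology poset_topology (\<lambda>x. H (x, t)))
    \<and> (\<forall>x. H (x, 0) = f x) \<and> (\<forall>x. H (x, 1) = g x))"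

end

theory Submission
  imports Defs
begin

lemma topspace_poset[simp]: "topspace (poset_topology :: 'a::order topology) = UNIV"
  by (metis openin_poset_topology openin_subset lower_set_def UNIV_I subset_antisym subsetI)

lemma cont_mono:
  assumes "continuous_map poset_topology poset_topology h" "x \<le> y"
  shows "h x \<le> (h y :: 'b::order)"
proof -
  have "lower_set {z. z \<le> h y}" unfolding lower_set_def by auto
  hence "openin poset_topology {x \<in> topspace poset_topology. h x \<in> {z. z \<le> h y}}"
    using assms(1) unfolding continuous_map_def openin_poset_topology by blast
  hence "lower_set {x. h x \<le> h y}" by (simp add: openin_poset_topology)
  thus ?thesis using assms(2) unfolding lower_set_def by blast
qed

lemma homeo_chain:
  assumes "homeomorphic_map poset_topology poset_topology (h::'a::order\<Rightarrow>'a)"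
    and "chain_ending_at a n"
  shows "chain_ending_at (h a) n"
proof -
  have c: "continuous_map poset_topology poset_topology h" and inj: "inj h"
    using assms(1) homeomorphic_imp_continuous_map homeomorphic_imp_injective_map
    by (fastforce, metis homeomorphic_imp_injective_map inj_on_def topspace_poset UNIV_I)
  obtain c0 where c0: "\<forall>i<n. c0 i < c0 (Suc i)" "c0 n = a"
    using assms(2) unfolding chain_ending_at_def by blast
  have "\<forall>i<n. h (c0 i) < h (c0 (Suc i))"
  proof (intro allI impI)
    fix i assume "i < n"
    hence "c0 i < c0 (Suc i)" using c0 by auto
    thus "h (c0 i) < h (c0 (Suc i))"
      using cont_mono[OF c] inj by (metis inj_eq order_less_le)
  qed
  thus ?thesis unfolding chain_ending_at_def using c0 by (intro exI[of _ "h \<circ> c0"]) auto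
qed

lemma homeo_Ht:
  assumes "homeomorphic_map poset_topology poset_topology (h::'a::order\<Rightarrow>'a)"
  shows "Ht (h a) = Ht a"
proof -
  obtain k where "homeomorphic_maps poset_topology poset_topology h k"
    using assms by (auto simp: homeomorphic_map_maps)
  hence k: "homeomorphic_map poset_topology poset_topology k" "\<And>x. k (h x) = x"
    unfolding homeomorphic_maps_map by auto
  have "chain_ending_at (h a) n = chain_ending_at a n" for n
    using homeo_chain[OF assms] homeo_chain[OF k(1), of "h a" n] k(2) by auto
  thus ?thesis unfolding Ht_def by simp
qed

lemma Ht_strict:
  fixes a b :: "'a::order"
  assumes "a < b" "Ht a \<noteq> \<infinity>"
  shows "Ht a < Ht b"
proof -
  let ?S = "{enat n | n. chain_ending_at a n}"
  have ne: "?S \<noteq> {}" unfolding chain_ending_at_def by (auto intro!: exI[of _ 0])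
  have fin: "finite ?S" using assms(2) ne unfolding Ht_def Sup_enat_def by (auto split: if_splits)
  have "Max ?S \<in> ?S" using fin ne by (rule Max_in)
  moreover have "Ht a = Max ?S" using fin ne unfolding Ht_def Sup_enat_def by auto
  ultimately obtain n where n: "Ht a = enat n" "chain_ending_at a n" by auto
  then obtain c where c: "\<forall>i<n. c i < c (Suc i)" "c n = a" unfolding chain_ending_at_def by blast
  have "chain_ending_at b (Suc n)" unfolding chain_ending_at_def
    using c assms(1) by (intro exI[of _ "\<lambda>i. if i \<le> n then c i else b"]) (auto simp: less_Suc_eq_le, metis Suc_leI le_neq_implies_less)
  hence "enat (Suc n) \<le> Ht b" unfolding Ht_def by (intro Sup_upper) blast
  moreover have "enat n < enat (Suc n)" by simp
  ultimately show ?thesis using n by (metis order_less_le_trans)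
qed

lemma path_const:
  fixes H :: "'a::order \<times> real \<Rightarrow> 'a"
  assumes fh: "\<And>a::'a. Ht a \<noteq> \<infinity>"
    and cH: "continuous_map (prod_topology poset_topology (top_of_set {0..1})) poset_topology H"
    and hH: "\<forall>t\<in>{0..1}. homeomorphic_map poset_topology poset_topology (\<lambda>x. H (x, t))"
  shows "H (x, 1) = H (x, 0)"
proof -
  define \<gamma> where "\<gamma> t = H (x, t)" for t
  have cg: "continuous_map (top_of_set {0..1}) poset_topology \<gamma>"
    unfolding \<gamma>_def
    by (rule continuous_map_compose[OF _ cH, unfolded o_def])
       (intro continuous_map_pairedI continuous_map_id continuous_map_const[THEN iffD2]; simp)
  have ht: "Ht (\<gamma> t) = Ht x" if "t \<in> {0..1}" for t
    using homeo_Ht[OF hH[rule_format, OF that]] unfolding \<gamma>_def by simp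
  have opn: "openin (top_of_set {0..1}) {t \<in> {0..1}. \<gamma> t = \<gamma> s}" if s: "s \<in> {0..1}" for s
  proof -
    have "lower_set {z. z \<le> \<gamma> s}" unfolding lower_set_def by auto
    hence o: "openin (top_of_set {0..1}) {t \<in> {0..1}. \<gamma> t \<in> {z. z \<le> \<gamma> s}}"
      using cg unfolding continuous_map_def openin_poset_topology by auto
    have "{t \<in> {0..1}. \<gamma> t \<in> {z. z \<le> \<gamma> s}} = {t \<in> {0..1}. \<gamma> t = \<gamma> s}"
    proof (auto)
      fix t :: real assume t: "0 \<le> t" "t \<le> 1" "\<gamma> t \<le> \<gamma> s"
      show "\<gamma> t = \<gamma> s"
      proof (rule ccontr)
        assume "\<gamma> t \<noteq> \<gamma> s"
        hence "Ht (\<gamma> t) < Ht (\<gamma> s)" using t fh by (intro Ht_strict) auto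
        thus False using ht[of t] ht[OF s] t by simp
      qed
    qed
    thus ?thesis using o by simp
  qed
  let ?A = "{t \<in> {0..1}. \<gamma> t = \<gamma> 0}"
  have oA: "openin (top_of_set {0..1}) ?A" using opn[of 0] by simp
  have "{0..1} - ?A = (\<Union>s\<in>{s\<in>{0..1}. \<gamma> s \<noteq> \<gamma> 0}. {t \<in> {0..1}. \<gamma> t = \<gamma> s})" by auto
  hence "openin (top_of_set {0..1}) ({0..1} - ?A)" using opn by auto
  hence cA: "closedin (top_of_set {0..1}) ?A" by (auto simp: closedin_def)
  have "connected {0..1::real}" by simp
  hence "?A = {} \<or> ?A = {0..1}" using oA cA connected_clopen by blast
  moreover have "(0::real) \<in> ?A" by simp
  ultimately have "?A = {0..1}" by blast
  moreover have "(1::real) \<in> {0..1}" by simp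
  ultimately have "(1::real) \<in> ?A" by blast
  thus ?thesis unfolding \<gamma>_def by simp
qed

theorem theorem3p3:
  fixes f g :: "'a::order \<Rightarrow> 'a"
  assumes finite_height: "\<And>a::'a. Ht a \<noteq> \<infinity>"
    and countable_classes: "\<And>a::'a. countable {a'. down_equiv a a'}"
    and f: "homeomorphic_map poset_topology poset_topology f"
    and g: "homeomorphic_map poset_topology poset_topology g"
  shows "isotopic f g \<longleftrightarrow> f = g"
proof
  assume "isotopic f g"
  then obtain H :: "'a \<times> real \<Rightarrow> 'a" where H:
      "continuous_map (prod_topology poset_topology (top_of_set {0..1})) poset_topology H"
      "\<forall>t\<in>{0..1}. homeomorphic_map poset_topology poset_topology (\<lambda>x. H (x, t))"
      "\<forall>x. H (x, 0) = f x" "\<forall>x. H (x, 1) = g x"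
    unfolding isotopic_def by blast
  show "f = g"
  proof
    fix x show "f x = g x" using path_const[OF finite_height H(1) H(2), of x] H(3,4) by simp
  qed
next
  assume "f = g"
  have "continuous_map (prod_topology poset_topology (top_of_set {0..1})) poset_topology (\<lambda>p. f (fst p))"
    using continuous_map_compose[OF continuous_map_fst homeomorphic_imp_continuous_map[OF f]]
    by (simp add: o_def)
  moreover have "\<forall>t\<in>{0..1::real}. homeomorphic_map poset_topology poset_topology (\<lambda>x. f (fst (x, t)))"
    using f by simp
  ultimately show "isotopic f g" unfolding isotopic_def using \<open>f = g\<close>
    by (intro exI[of _ "\<lambda>p. f (fst p)"]) simp
qed

end
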